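(* The following equations are derivable in equational logic from $\mathsf{Md}_\bot$: $0\cdot 0=0$; $-0=0$; $0\cdot x=0\cdot(-x)$; $0\cdot(x\cdot y)=0\cdot(x+y)$; $-(x\cdot y)=x\cdot(-y)$; $(-1)\cdot x=-x$; $(-x)^{-1}=-(x^{-1})$; $(x\cdot x^{-1})\cdot x^{-1}=x^{-1}$; $-\bot=\bot$; $\bot^{-1}=\bot$.
   Context: The signature has one sort, constants $0,1,\bot$, binary operations $+,\cdot$ and unary operations $-$ and $(\,\cdot\,)^{-1}$; $^{-1}$ binds stronger than $\cdot$, which binds stronger than $+$. $\mathsf{Md}_\bot$ is the set of equations (variables universally quantified): $(x+y)+z=x+(y+z)$; $x+y=y+x$; $x+0=x$; $x+(-x)=0\cdot x$; $(x\cdot y)\cdot z=x\cdot(y\cdot z)$; $x\cdot y=y\cdot x$; $1\cdot x=x$; $x\cdot(y+z)=x\cdot y+x\cdot z$; $-(-x)=x$; $0\cdot(x\cdot x)=0\cdot x$; $(x^{-1})^{-1}=x+0\cdot x^{-1}$; $x\cdot x^{-1}=1+0\cdot x^{-1}$; $(x\cdot y)^{-1}=x^{-1}\cdot y^{-1}$; $1^{-1}=1$; $0^{-1}=\bot$; $x+\bot=\bot$; $x\cdot\bot=\bot$. *)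

theory Defs
  imports Main
begin

datatype trm = Var nat | Zero | One | Bot
  | Add trm trm | Mul trm trm | Neg trm | Inv trm

primrec subst :: "(nat \<Rightarrow> trm) \<Rightarrow> trm \<Rightarrow> trm" where
  "subst \<sigma> (Var n) = \<sigma> n"
| "subst \<sigma> Zero = Zero"
| "subst \<sigma> One = One"
| "subst \<sigma> Bot = Bot"
| "subst \<sigma> (Add s t) = Add (subst \<sigma> s) (subst \<sigma> t)"
| "subst \<sigma> (Mul s t) = Mul (subst \<sigma> s) (subst \<sigma> t)"
| "subst \<sigma> (Neg s) = Neg (subst \<sigma> s)"
| "subst \<sigma> (Inv s) = Inv (subst \<sigma> s)"

abbreviation "vx \<equiv> Var 0"
abbreviation "vy \<equiv> Var 1"
abbreviation "vz \<equiv> Var 2"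

definition Md_bot :: "(trm \<times> trm) set" where
  "Md_bot = {
    (Add (Add vx vy) vz, Add vx (Add vy vz)),
    (Add vx vy, Add vy vx),
    (Add vx Zero, vx),
    (Add vx (Neg vx), Mul Zero vx),
    (Mul (Mul vx vy) vz, Mul vx (Mul vy vz)),
    (Mul vx vy, Mul vy vx),
    (Mul One vx, vx),
    (Mul vx (Add vy vz), Add (Mul vx vy) (Mul vx vz)),
    (Neg (Neg vx), vx),
    (Mul Zero (Mul vx vx), Mul Zero vx),
    (Inv (Inv vx), Add vx (Mul Zero (Inv vx))),
    (Mul vx (Inv vx), Add One (Mul Zero (Inv vx))),
    (Inv (Mul vx vy), Mul (Inv vx) (Inv vy)),
    (Inv One, One),
    (Inv Zero, Bot),
    (Add vx Bot, Bot),
    (Mul vx Bot, Bot) }"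

inductive derivable :: "(trm \<times> trm) set \<Rightarrow> trm \<Rightarrow> trm \<Rightarrow> bool" for E where
  ax: "(s, t) \<in> E \<Longrightarrow> derivable E (subst \<sigma> s) (subst \<sigma> t)"
| refl: "derivable E t t"
| sym: "derivable E s t \<Longrightarrow> derivable E t s"
| trans: "derivable E s t \<Longrightarrow> derivable E t u \<Longrightarrow> derivable E s u"
| cong_Add: "derivable E s1 t1 \<Longrightarrow> derivable E s2 t2 \<Longrightarrow> derivable E (Add s1 s2) (Add t1 t2)"
| cong_Mul: "derivable E s1 t1 \<Longrightarrow> derivable E s2 t2 \<Longrightarrow> derivable E (Mul s1 s2) (Mul t1 t2)"
| cong_Neg: "derivable E s t \<Longrightarrow> derivable E (Neg s) (Neg t)"
| cong_Inv: "derivable E s t \<Longrightarrow> derivable E (Inv s) (Inv t)"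

end

theory Submission
  imports Defs
begin

abbreviation deq (infix "\<approx>" 50) where "s \<approx> t \<equiv> derivable Md_bot s t"

lemma tr[trans]: "s \<approx> t \<Longrightarrow> t \<approx> u \<Longrightarrow> s \<approx> u" by (rule derivable.trans)
lemmas sy = derivable.sym
lemmas rf = derivable.refl

lemma axi: "(l, r) \<in> Md_bot \<Longrightarrow> subst \<sigma> l \<approx> subst \<sigma> r" by (rule derivable.ax)

definition s3 :: "trm \<Rightarrow> trm \<Rightarrow> trm \<Rightarrow> nat \<Rightarrow> trm" where
  "s3 a b c = (\<lambda>n. if n = 0 then a else if n = 1 then b else c)"

lemma ins: "(l, r) \<in> Md_bot \<Longrightarrow> subst (s3 a b c) l = L \<Longrightarrow> subst (s3 a b c) r = R \<Longrightarrow> L \<approx> R"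
  using axi by blast


lemma A1: "Add (Add a b) c \<approx> Add a (Add b c)" using axi[of "Add (Add vx vy) vz" "Add vx (Add vy vz)" "s3 a b c"] by (simp add: Md_bot_def s3_def)
lemma A2: "Add a b \<approx> Add b a" using axi[of "Add vx vy" "Add vy vx" "s3 a b a"] by (simp add: Md_bot_def s3_def)
lemma A3: "Add a Zero \<approx> a" using axi[of "Add vx Zero" "vx" "s3 a a a"] by (simp add: Md_bot_def s3_def)
lemma A4: "Add a (Neg a) \<approx> Mul Zero a" using axi[of "Add vx (Neg vx)" "Mul Zero vx" "s3 a a a"] by (simp add: Md_bot_def s3_def)
lemma M1: "Mul (Mul a b) c \<approx> Mul a (Mul b c)" using axi[of "Mul (Mul vx vy) vz" "Mul vx (Mul vy vz)" "s3 a b c"] by (simp add: Md_bot_def s3_def)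
lemma M2: "Mul a b \<approx> Mul b a" using axi[of "Mul vx vy" "Mul vy vx" "s3 a b a"] by (simp add: Md_bot_def s3_def)
lemma M3: "Mul One a \<approx> a" using axi[of "Mul One vx" "vx" "s3 a a a"] by (simp add: Md_bot_def s3_def)
lemma D: "Mul a (Add b c) \<approx> Add (Mul a b) (Mul a c)" using axi[of "Mul vx (Add vy vz)" "Add (Mul vx vy) (Mul vx vz)" "s3 a b c"] by (simp add: Md_bot_def s3_def)
lemma N: "Neg (Neg a) \<approx> a" using axi[of "Neg (Neg vx)" "vx" "s3 a a a"] by (simp add: Md_bot_def s3_def)
lemma Z: "Mul Zero (Mul a a) \<approx> Mul Zero a" using axi[of "Mul Zero (Mul vx vx)" "Mul Zero vx" "s3 a a a"] by (simp add: Md_bot_def s3_def)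
lemma I1: "Inv (Inv a) \<approx> Add a (Mul Zero (Inv a))" using axi[of "Inv (Inv vx)" "Add vx (Mul Zero (Inv vx))" "s3 a a a"] by (simp add: Md_bot_def s3_def)
lemma I2: "Mul a (Inv a) \<approx> Add One (Mul Zero (Inv a))" using axi[of "Mul vx (Inv vx)" "Add One (Mul Zero (Inv vx))" "s3 a a a"] by (simp add: Md_bot_def s3_def)
lemma I3: "Inv (Mul a b) \<approx> Mul (Inv a) (Inv b)" using axi[of "Inv (Mul vx vy)" "Mul (Inv vx) (Inv vy)" "s3 a b a"] by (simp add: Md_bot_def s3_def)
lemma I4: "Inv One \<approx> One" using axi[of "Inv One" "One" "s3 One One One"] by (simp add: Md_bot_def s3_def)
lemma I5: "Inv Zero \<approx> Bot" using axi[of "Inv Zero" "Bot" "s3 One One One"] by (simp add: Md_bot_def s3_def)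
lemma B1: "Add a Bot \<approx> Bot" using axi[of "Add vx Bot" "Bot" "s3 a a a"] by (simp add: Md_bot_def s3_def)
lemma B2: "Mul a Bot \<approx> Bot" using axi[of "Mul vx Bot" "Bot" "s3 a a a"] by (simp add: Md_bot_def s3_def)

lemmas cg = rf derivable.cong_Add derivable.cong_Mul derivable.cong_Neg derivable.cong_Inv


lemma z1: "Mul Zero One \<approx> Zero"
proof -
  have "Mul Zero One \<approx> Mul One Zero" by (rule M2)
  also have "\<dots> \<approx> Zero" by (rule M3)
  finally show ?thesis .
qed

lemma onem: "Add One (Neg One) \<approx> Zero"
  using A4 z1 tr by blast

lemma zm1: "Mul Zero (Neg One) \<approx> Zero"
proof -
  have "Mul Zero (Neg One) \<approx> Add (Neg One) (Neg (Neg One))" by (rule sy[OF A4])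
  also have "\<dots> \<approx> Add (Neg One) One" by (intro N cg)
  also have "\<dots> \<approx> Add One (Neg One)" by (rule A2)
  also have "\<dots> \<approx> Zero" by (rule onem)
  finally show ?thesis .
qed

lemma zz: "Mul Zero Zero \<approx> Zero"
proof -
  have "Mul Zero Zero \<approx> Mul Zero (Add One (Neg One))" by (intro sy[OF onem] cg)
  also have "\<dots> \<approx> Add (Mul Zero One) (Mul Zero (Neg One))" by (rule D)
  also have "\<dots> \<approx> Add Zero Zero" by (intro z1 zm1 cg)
  also have "\<dots> \<approx> Zero" by (rule A3)
  finally show ?thesis .
qed

lemma negz: "Neg Zero \<approx> Zero"
proof -
  have "Neg Zero \<approx> Add (Neg Zero) Zero" by (rule sy[OF A3])
  also have "\<dots> \<approx> Add Zero (Neg Zero)" by (rule A2)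
  also have "\<dots> \<approx> Mul Zero Zero" by (rule A4)
  also have "\<dots> \<approx> Zero" by (rule zz)
  finally show ?thesis .
qed

lemma zneg: "Mul Zero x \<approx> Mul Zero (Neg x)"
proof -
  have "Mul Zero x \<approx> Add x (Neg x)" by (rule sy[OF A4])
  also have "\<dots> \<approx> Add (Neg x) x" by (rule A2)
  also have "\<dots> \<approx> Add (Neg x) (Neg (Neg x))" by (intro sy[OF N] cg)
  also have "\<dots> \<approx> Mul Zero (Neg x)" by (rule A4)
  finally show ?thesis .
qed

lemma zA: "Mul Zero (Mul Zero x) \<approx> Mul Zero x"
proof -
  have "Mul Zero (Mul Zero x) \<approx> Mul (Mul Zero Zero) x" by (rule sy[OF M1])
  also have "\<dots> \<approx> Mul Zero x" by (intro zz cg)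
  finally show ?thesis .
qed

lemma idem: "Add (Mul Zero x) (Mul Zero x) \<approx> Mul Zero x"
proof -
  have "Add (Mul Zero x) (Mul Zero x) \<approx> Add (Mul x Zero) (Mul x Zero)" by (intro M2 cg)
  also have "\<dots> \<approx> Mul x (Add Zero Zero)" by (rule sy[OF D])
  also have "\<dots> \<approx> Mul x Zero" by (intro A3 cg)
  also have "\<dots> \<approx> Mul Zero x" by (rule M2)
  finally show ?thesis .
qed

lemma sw: "Mul x (Mul Zero y) \<approx> Mul Zero (Mul x y)"
proof -
  have "Mul x (Mul Zero y) \<approx> Mul (Mul x Zero) y" by (rule sy[OF M1])
  also have "\<dots> \<approx> Mul (Mul Zero x) y" by (intro M2 cg)
  also have "\<dots> \<approx> Mul Zero (Mul x y)" by (rule M1)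
  finally show ?thesis .
qed

lemma zprod: "Mul (Mul Zero x) (Mul Zero y) \<approx> Mul Zero (Mul x y)"
proof -
  have "Mul (Mul Zero x) (Mul Zero y) \<approx> Mul Zero (Mul x (Mul Zero y))" by (rule M1)
  also have "\<dots> \<approx> Mul Zero (Mul Zero (Mul x y))" by (intro sw cg)
  also have "\<dots> \<approx> Mul Zero (Mul x y)" by (rule zA)
  finally show ?thesis .
qed

lemma one_r: "Mul a One \<approx> a"
  using M2 M3 tr by blast

lemma abs1: "Add (Mul Zero (Mul x y)) (Mul Zero x) \<approx> Mul Zero (Mul x y)"
proof -
  have "Add (Mul Zero (Mul x y)) (Mul Zero x) \<approx> Add (Mul (Mul Zero x) (Mul Zero y)) (Mul (Mul Zero x) One)"
    by (intro sy[OF zprod] sy[OF one_r] cg)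
  also have "\<dots> \<approx> Mul (Mul Zero x) (Add (Mul Zero y) One)" by (rule sy[OF D])
  also have "\<dots> \<approx> Mul (Mul x Zero) (Add (Mul Zero y) One)" by (intro M2 cg)
  also have "\<dots> \<approx> Mul x (Mul Zero (Add (Mul Zero y) One))" by (rule M1)
  also have "\<dots> \<approx> Mul x (Add (Mul Zero (Mul Zero y)) (Mul Zero One))" by (intro D cg)
  also have "\<dots> \<approx> Mul x (Add (Mul Zero y) Zero)" by (intro zA z1 cg)
  also have "\<dots> \<approx> Mul x (Mul Zero y)" by (intro A3 cg)
  also have "\<dots> \<approx> Mul Zero (Mul x y)" by (rule sw)
  finally show ?thesis .
qed

lemma abs2: "Add (Mul Zero (Mul x y)) (Mul Zero y) \<approx> Mul Zero (Mul x y)"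
proof -
  have "Add (Mul Zero (Mul x y)) (Mul Zero y) \<approx> Add (Mul Zero (Mul y x)) (Mul Zero y)" by (intro M2 cg)
  also have "\<dots> \<approx> Mul Zero (Mul y x)" by (rule abs1)
  also have "\<dots> \<approx> Mul Zero (Mul x y)" by (intro M2 cg)
  finally show ?thesis .
qed

lemma p4: "Mul Zero (Mul x y) \<approx> Mul Zero (Add x y)"
proof -
  have "Mul Zero (Add x y) \<approx> Mul Zero (Mul (Add x y) (Add x y))" by (rule sy[OF Z])
  also have "\<dots> \<approx> Mul Zero (Add (Mul (Add x y) x) (Mul (Add x y) y))" by (intro D cg)
  also have "\<dots> \<approx> Mul Zero (Add (Mul x (Add x y)) (Mul y (Add x y)))" by (intro M2 cg)
  also have "\<dots> \<approx> Mul Zero (Add (Add (Mul x x) (Mul x y)) (Add (Mul y x) (Mul y y)))" by (intro D cg)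
  also have "\<dots> \<approx> Add (Mul Zero (Add (Mul x x) (Mul x y))) (Mul Zero (Add (Mul y x) (Mul y y)))" by (rule D)
  also have "\<dots> \<approx> Add (Add (Mul Zero (Mul x x)) (Mul Zero (Mul x y))) (Add (Mul Zero (Mul y x)) (Mul Zero (Mul y y)))" by (intro D cg)
  also have "\<dots> \<approx> Add (Add (Mul Zero x) (Mul Zero (Mul x y))) (Add (Mul Zero (Mul x y)) (Mul Zero y))" by (intro Z M2 cg)
  also have "\<dots> \<approx> Add (Add (Mul Zero (Mul x y)) (Mul Zero x)) (Add (Mul Zero (Mul x y)) (Mul Zero y))" by (intro A2 cg)
  also have "\<dots> \<approx> Add (Mul Zero (Mul x y)) (Add (Mul Zero (Mul x y)) (Mul Zero y))" by (intro abs1 cg)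
  also have "\<dots> \<approx> Add (Add (Mul Zero (Mul x y)) (Mul Zero (Mul x y))) (Mul Zero y)" by (rule sy[OF A1])
  also have "\<dots> \<approx> Add (Mul Zero (Mul x y)) (Mul Zero y)" by (intro idem cg)
  also have "\<dots> \<approx> Mul Zero (Mul x y)" by (rule abs2)
  finally show ?thesis by (rule sy)
qed

lemma plus0: "Add b (Mul Zero b) \<approx> b"
proof -
  have "Add b (Mul Zero b) \<approx> Add (Mul b One) (Mul b Zero)" by (intro sy[OF one_r] M2 cg)
  also have "\<dots> \<approx> Mul b (Add One Zero)" by (rule sy[OF D])
  also have "\<dots> \<approx> Mul b One" by (intro A3 cg)
  also have "\<dots> \<approx> b" by (rule one_r)
  finally show ?thesis .
qed

lemma uniq: assumes h1: "Add a b \<approx> Mul Zero a" and h2: "Mul Zero b \<approx> Mul Zero a"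
  shows "Neg a \<approx> b"
proof -
  have "Neg a \<approx> Add (Neg a) (Mul Zero (Neg a))" by (rule sy[OF plus0])
  also have "\<dots> \<approx> Add (Neg a) (Mul Zero a)" by (intro sy[OF zneg] cg)
  also have "\<dots> \<approx> Add (Neg a) (Add a b)" by (intro sy[OF h1] cg)
  also have "\<dots> \<approx> Add (Add (Neg a) a) b" by (rule sy[OF A1])
  also have "\<dots> \<approx> Add (Add a (Neg a)) b" by (intro A2 cg)
  also have "\<dots> \<approx> Add (Mul Zero a) b" by (intro A4 cg)
  also have "\<dots> \<approx> Add (Mul Zero b) b" by (intro sy[OF h2] cg)
  also have "\<dots> \<approx> Add b (Mul Zero b)" by (rule A2)
  also have "\<dots> \<approx> b" by (rule plus0)
  finally show ?thesis .
qed

lemma p5: "Neg (Mul x y) \<approx> Mul x (Neg y)"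
proof (rule uniq)
  have "Add (Mul x y) (Mul x (Neg y)) \<approx> Mul x (Add y (Neg y))" by (rule sy[OF D])
  also have "\<dots> \<approx> Mul x (Mul Zero y)" by (intro A4 cg)
  also have "\<dots> \<approx> Mul Zero (Mul x y)" by (rule sw)
  finally show "Add (Mul x y) (Mul x (Neg y)) \<approx> Mul Zero (Mul x y)" .
  have "Mul Zero (Mul x (Neg y)) \<approx> Mul x (Mul Zero (Neg y))" by (rule sy[OF sw])
  also have "\<dots> \<approx> Mul x (Mul Zero y)" by (intro sy[OF zneg] cg)
  also have "\<dots> \<approx> Mul Zero (Mul x y)" by (rule sw)
  finally show "Mul Zero (Mul x (Neg y)) \<approx> Mul Zero (Mul x y)" .
qed

lemma p6: "Mul (Neg One) x \<approx> Neg x"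
proof -
  have "Mul (Neg One) x \<approx> Mul x (Neg One)" by (rule M2)
  also have "\<dots> \<approx> Neg (Mul x One)" by (rule sy[OF p5])
  also have "\<dots> \<approx> Neg x" by (intro one_r cg)
  finally show ?thesis .
qed

lemma uu: "Mul (Inv (Neg One)) (Inv (Neg One)) \<approx> One"
proof -
  have "Mul (Inv (Neg One)) (Inv (Neg One)) \<approx> Inv (Mul (Neg One) (Neg One))" by (rule sy[OF I3])
  also have "\<dots> \<approx> Inv (Neg (Neg One))" by (intro p6 cg)
  also have "\<dots> \<approx> Inv One" by (intro N cg)
  also have "\<dots> \<approx> One" by (rule I4)
  finally show ?thesis .
qed

lemma um1: "Inv (Neg One) \<approx> Neg One"
proof -
  let ?u = "Inv (Neg One)"
  have zu: "Mul Zero ?u \<approx> Zero"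
  proof -
    have "Mul Zero ?u \<approx> Mul Zero (Mul ?u ?u)" by (rule sy[OF Z])
    also have "\<dots> \<approx> Mul Zero One" by (intro uu cg)
    also have "\<dots> \<approx> Zero" by (rule z1)
    finally show ?thesis .
  qed
  have mu: "Mul (Neg One) ?u \<approx> One"
  proof -
    have "Mul (Neg One) ?u \<approx> Add One (Mul Zero ?u)" by (rule I2)
    also have "\<dots> \<approx> Add One Zero" by (intro zu cg)
    also have "\<dots> \<approx> One" by (rule A3)
    finally show ?thesis .
  qed
  have "?u \<approx> Mul ?u One" by (rule sy[OF one_r])
  also have "\<dots> \<approx> Mul ?u (Mul (Neg One) (Neg One))" using tr[OF sy[OF N] sy[OF p6[of "Neg One"]]] by (intro cg)
  also have "\<dots> \<approx> Mul (Mul ?u (Neg One)) (Neg One)" by (rule sy[OF M1])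
  also have "\<dots> \<approx> Mul (Mul (Neg One) ?u) (Neg One)" by (intro M2 cg)
  also have "\<dots> \<approx> Mul One (Neg One)" by (intro mu cg)
  also have "\<dots> \<approx> Neg One" by (rule M3)
  finally show ?thesis .
qed

lemma p7: "Inv (Neg x) \<approx> Neg (Inv x)"
proof -
  have "Inv (Neg x) \<approx> Inv (Mul (Neg One) x)" by (intro sy[OF p6] cg)
  also have "\<dots> \<approx> Mul (Inv (Neg One)) (Inv x)" by (rule I3)
  also have "\<dots> \<approx> Mul (Neg One) (Inv x)" by (intro um1 cg)
  also have "\<dots> \<approx> Neg (Inv x)" by (rule p6)
  finally show ?thesis .
qed

lemma p8: "Mul (Mul x (Inv x)) (Inv x) \<approx> Inv x"
proof -
  let ?i = "Inv x"
  have "Mul (Mul x ?i) ?i \<approx> Mul (Add One (Mul Zero ?i)) ?i" by (intro I2 cg)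
  also have "\<dots> \<approx> Mul ?i (Add One (Mul Zero ?i))" by (rule M2)
  also have "\<dots> \<approx> Add (Mul ?i One) (Mul ?i (Mul Zero ?i))" by (rule D)
  also have "\<dots> \<approx> Add ?i (Mul Zero (Mul ?i ?i))" by (intro one_r sw cg)
  also have "\<dots> \<approx> Add ?i (Mul Zero ?i)" by (intro Z cg)
  also have "\<dots> \<approx> ?i" by (rule plus0)
  finally show ?thesis .
qed

lemma p9: "Neg Bot \<approx> Bot"
  using sy[OF p6] B2 tr by blast

lemma p10: "Inv Bot \<approx> Bot"
proof -
  have "Inv Bot \<approx> Inv (Inv Zero)" by (intro sy[OF I5] cg)
  also have "\<dots> \<approx> Add Zero (Mul Zero (Inv Zero))" by (rule I1)
  also have "\<dots> \<approx> Add Zero (Mul Zero Bot)" by (intro I5 cg)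
  also have "\<dots> \<approx> Add Zero Bot" by (intro B2 cg)
  also have "\<dots> \<approx> Bot" by (rule B1)
  finally show ?thesis .
qed

theorem proposition2p1:
  shows "derivable Md_bot (Mul Zero Zero) Zero
       \<and> derivable Md_bot (Neg Zero) Zero
       \<and> derivable Md_bot (Mul Zero vx) (Mul Zero (Neg vx))
       \<and> derivable Md_bot (Mul Zero (Mul vx vy)) (Mul Zero (Add vx vy))
       \<and> derivable Md_bot (Neg (Mul vx vy)) (Mul vx (Neg vy))
       \<and> derivable Md_bot (Mul (Neg One) vx) (Neg vx)
       \<and> derivable Md_bot (Inv (Neg vx)) (Neg (Inv vx))
       \<and> derivable Md_bot (Mul (Mul vx (Inv vx)) (Inv vx)) (Inv vx)
       \<and> derivable Md_bot (Neg Bot) Bot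
       \<and> derivable Md_bot (Inv Bot) Bot"
  using zz negz zneg p4 p5 p6 p7 p8 p9 p10 by blast

end
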